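(* Let $q_0$ be a probability distribution on $\mathcal X_1$ and, for each $h<H$ and $(x_h,a_h)\in\mathcal A(\mathcal X_h)$, let $q_h(\cdot|x_h,a_h)$ be a probability distribution on $\mathcal X_{h+1}(x_h,a_h)$; set $q_{1:h}(x_h)=q_0(x_1)\prod_{h'=1}^{h-1}q_{h'}(x_{h'+1}|x_{h'},a_{h'})$ along the history of $x_h$. Then $$\sum_{h=1}^H\sum_{x_h\in\mathcal X_h}A(x_h)\frac{q_{1:h}(x_h)}{p^\star_{1:h}(x_h)}=A_{\mathcal X}.$$ Moreover, if $A(x)=A$ for all $x\in\mathcal X$, then for every $h\in[H]$, $$\sum_{x_h\in\mathcal X_h}A(x_h)\frac{q_{1:h}(x_h)}{p^\star_{1:h}(x_h)}\le A^{h-H}A_{\mathcal X}.$$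
   Context: The max-player's information sets form a finite set $\mathcal X=\bigsqcup_{h=1}^H\mathcal X_h$ with perfect recall: each $x_h\in\mathcal X_h$ has a unique history $(x_1,a_1,\dots,x_{h-1},a_{h-1},x_h)$ with $x_i\in\mathcal X_i$, $a_i\in\mathcal A(x_i)$, where $\mathcal A(x)$ is a finite nonempty action set of size $A(x)$. For $h<H$, $\mathcal X_{h+1}(x_h,a_h)$ is the set of $x_{h+1}\in\mathcal X_{h+1}$ whose history contains $(x_h,a_h)$, assumed nonempty. $\mathcal A(\mathcal X_h)=\{(x_h,a_h):x_h\in\mathcal X_h,a_h\in\mathcal A(x_h)\}$, $A_{\mathcal X}=\sum_{x\in\mathcal X}A(x)$. Write $x'\ge x$ if $x'=x$ or $x$ appears in the history of $x'$. Balanced transitions: $A^\tau(x)=\sum_{x'\ge x}A(x')$; $p^\star_0(x_1)=A^\tau(x_1)/A_{\mathcal X}$ for $x_1\in\mathcal X_1$; $p^\star_h(x_{h+1}|x_h,a_h)=A^\tau(x_{h+1})/\sum_{x'\in\mathcal X_{h+1}(x_h,a_h)}A^\tau(x')$; $p^\star_{1:h}(x_h)=p^\star_0(x_1)\prod_{h'=1}^{h-1}p^\star_{h'}(x_{h'+1}|x_{h'},a_{h'})$ along the history of $x_h$. *)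

theory Defs
  imports Main "HOL-Library.FuncSet" Complex_Main
begin

text \<open>Information sets of the max-player are elements of a finite set X of some type 'x.
  layer x in {1..H} is the step h with x in X_h; Act x is the finite nonempty action set A(x);
  par y = (x, a) gives the immediate predecessor pair (x_{h-1}, a_{h-1}) in the (unique, by
  perfect recall) history of y, for y in a layer h > 1.\<close>

definition layer_set :: "'x set \<Rightarrow> ('x \<Rightarrow> nat) \<Rightarrow> nat \<Rightarrow> 'x set" where
  "layer_set X layer h = {x \<in> X. layer x = h}"

definition children :: "'x set \<Rightarrow> ('x \<Rightarrow> nat) \<Rightarrow> ('x \<Rightarrow> 'x \<times> 'a) \<Rightarrow> 'x \<Rightarrow> 'a \<Rightarrow> 'x set" where
  "children X layer par x a = {y \<in> X. 1 < layer y \<and> par y = (x, a)}"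

definition infoset_tree ::
  "'x set \<Rightarrow> nat \<Rightarrow> ('x \<Rightarrow> nat) \<Rightarrow> ('x \<Rightarrow> 'a set) \<Rightarrow> ('x \<Rightarrow> 'x \<times> 'a) \<Rightarrow> bool" where
  "infoset_tree X H layer Act par \<longleftrightarrow>
     finite X \<and>
     (\<forall>x\<in>X. 1 \<le> layer x \<and> layer x \<le> H) \<and>
     (\<forall>x\<in>X. finite (Act x) \<and> Act x \<noteq> {}) \<and>
     (\<forall>y\<in>X. 1 < layer y \<longrightarrow>
        fst (par y) \<in> X \<and> layer (fst (par y)) = layer y - 1 \<and> snd (par y) \<in> Act (fst (par y))) \<and>
     (\<forall>x\<in>X. layer x < H \<longrightarrow> (\<forall>a\<in>Act x. children X layer par x a \<noteq> {}))"

primrec anc :: "('x \<Rightarrow> 'x \<times> 'a) \<Rightarrow> nat \<Rightarrow> 'x \<Rightarrow> 'x" where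
  "anc par 0 y = y"
| "anc par (Suc n) y = fst (par (anc par n y))"

definition desc :: "('x \<Rightarrow> nat) \<Rightarrow> ('x \<Rightarrow> 'x \<times> 'a) \<Rightarrow> 'x \<Rightarrow> 'x \<Rightarrow> bool" where
  "desc layer par x' x \<longleftrightarrow> (\<exists>n < layer x'. anc par n x' = x)"

definition A_X :: "'x set \<Rightarrow> ('x \<Rightarrow> 'a set) \<Rightarrow> nat" where
  "A_X X Act = (\<Sum>x\<in>X. card (Act x))"

definition A_tau :: "'x set \<Rightarrow> ('x \<Rightarrow> nat) \<Rightarrow> ('x \<Rightarrow> 'a set) \<Rightarrow> ('x \<Rightarrow> 'x \<times> 'a) \<Rightarrow> 'x \<Rightarrow> nat" where
  "A_tau X layer Act par x = (\<Sum>x'\<in>{x' \<in> X. desc layer par x' x}. card (Act x'))"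

definition pstar0 :: "'x set \<Rightarrow> ('x \<Rightarrow> nat) \<Rightarrow> ('x \<Rightarrow> 'a set) \<Rightarrow> ('x \<Rightarrow> 'x \<times> 'a) \<Rightarrow> 'x \<Rightarrow> real" where
  "pstar0 X layer Act par x = real (A_tau X layer Act par x) / real (A_X X Act)"

definition pstar_trans :: "'x set \<Rightarrow> ('x \<Rightarrow> nat) \<Rightarrow> ('x \<Rightarrow> 'a set) \<Rightarrow> ('x \<Rightarrow> 'x \<times> 'a)
    \<Rightarrow> 'x \<Rightarrow> 'a \<Rightarrow> 'x \<Rightarrow> real" where
  "pstar_trans X layer Act par x a y =
     real (A_tau X layer Act par y) / real (\<Sum>y'\<in>children X layer par x a. A_tau X layer Act par y')"

primrec path_prob :: "('x \<Rightarrow> 'x \<times> 'a) \<Rightarrow> ('x \<Rightarrow> real) \<Rightarrow> ('x \<Rightarrow> 'a \<Rightarrow> 'x \<Rightarrow> real)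
    \<Rightarrow> nat \<Rightarrow> 'x \<Rightarrow> real" where
  "path_prob par q0 q 0 y = q0 y"
| "path_prob par q0 q (Suc n) y = path_prob par q0 q n (fst (par y)) * q (fst (par y)) (snd (par y)) y"

definition q_path :: "('x \<Rightarrow> nat) \<Rightarrow> ('x \<Rightarrow> 'x \<times> 'a) \<Rightarrow> ('x \<Rightarrow> real) \<Rightarrow> ('x \<Rightarrow> 'a \<Rightarrow> 'x \<Rightarrow> real)
    \<Rightarrow> 'x \<Rightarrow> real" where
  "q_path layer par q0 q y = path_prob par q0 q (layer y - 1) y"

definition pstar_path :: "'x set \<Rightarrow> ('x \<Rightarrow> nat) \<Rightarrow> ('x \<Rightarrow> 'a set) \<Rightarrow> ('x \<Rightarrow> 'x \<times> 'a) \<Rightarrow> 'x \<Rightarrow> real" where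
  "pstar_path X layer Act par y =
     q_path layer par (pstar0 X layer Act par) (pstar_trans X layer Act par) y"

end

theory Submission
  imports Defs
begin

locale T =
  fixes X :: "'x set" and H :: nat and layer :: "'x \<Rightarrow> nat" and Act :: "'x \<Rightarrow> 'a set"
    and par :: "'x \<Rightarrow> 'x \<times> 'a"
  assumes tree: "infoset_tree X H layer Act par"
begin

lemma finX: "finite X" using tree by (simp add: infoset_tree_def)
lemma lay: "x\<in>X \<Longrightarrow> 1 \<le> layer x \<and> layer x \<le> H" using tree by (simp add: infoset_tree_def)
lemma actfin: "x\<in>X \<Longrightarrow> finite (Act x)" using tree by (simp add: infoset_tree_def)
lemma actne: "x\<in>X \<Longrightarrow> Act x \<noteq> {}" using tree by (simp add: infoset_tree_def)
lemma parX: "y\<in>X \<Longrightarrow> 1 < layer y \<Longrightarrow> fst (par y) \<in> X \<and> layer (fst (par y)) = layer y - 1 \<and> snd (par y) \<in> Act (fst (par y))"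
  using tree by (simp add: infoset_tree_def)
lemma chne: "x\<in>X \<Longrightarrow> layer x < H \<Longrightarrow> a\<in>Act x \<Longrightarrow> children X layer par x a \<noteq> {}"
  using tree by (simp add: infoset_tree_def)

lemma anc_Suc': "anc par (Suc n) y = anc par n (fst (par y))"
  by (induction n arbitrary: y) auto

lemma anc_X: "x\<in>X \<Longrightarrow> n < layer x \<Longrightarrow> anc par n x \<in> X \<and> layer (anc par n x) = layer x - n"
proof (induction n)
  case 0 then show ?case by simp
next
  case (Suc n)
  then have h: "anc par n x \<in> X" "layer (anc par n x) = layer x - n" by auto
  then show ?case using parX[OF h(1)] Suc.prems by auto
qed

lemma desc_iff: "x'\<in>X \<Longrightarrow> x\<in>X \<Longrightarrow> desc layer par x' x \<longleftrightarrow> layer x \<le> layer x' \<and> anc par (layer x' - layer x) x' = x"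
proof
  assume a: "x'\<in>X" "x\<in>X" "desc layer par x' x"
  then obtain n where n: "n < layer x'" "anc par n x' = x" by (auto simp: desc_def)
  have "layer x = layer x' - n" using anc_X[OF a(1) n(1)] n(2) by simp
  then have "layer x \<le> layer x'" "layer x' - layer x = n" using n(1) by arith+
  then show "layer x \<le> layer x' \<and> anc par (layer x' - layer x) x' = x" using n(2) by simp
next
  assume a: "x'\<in>X" "x\<in>X" "layer x \<le> layer x' \<and> anc par (layer x' - layer x) x' = x"
  then show "desc layer par x' x" using lay[OF a(2)] unfolding desc_def
    by (intro exI[of _ "layer x' - layer x"]) auto
qed

definition D where "D x = {x'\<in>X. desc layer par x' x}"
definition C where "C x = {y\<in>X. 1 < layer y \<and> fst (par y) = x}"

lemma C_layer: "y \<in> C x \<Longrightarrow> x \<in> X \<and> layer y = Suc (layer x) \<and> y \<in> X"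
  using parX by (fastforce simp: C_def)

lemma D_sub: "D x \<subseteq> X" by (auto simp: D_def)
lemma finD: "finite (D x)" using finX D_sub finite_subset by blast
lemma finC: "finite (C x)" using finX by (auto simp: C_def)

lemma D_decomp: assumes x: "x\<in>X" shows "D x = insert x (\<Union>y\<in>C x. D y)"
proof
  show "D x \<subseteq> insert x (\<Union>y\<in>C x. D y)"
  proof
    fix x' assume "x' \<in> D x"
    then have x': "x'\<in>X" "layer x \<le> layer x'" "anc par (layer x' - layer x) x' = x"
      using desc_iff x by (auto simp: D_def)
    show "x' \<in> insert x (\<Union>y\<in>C x. D y)"
    proof (cases "layer x = layer x'")
      case True then show ?thesis using x' by simp
    next
      case False
      define m where "m = layer x' - layer x - 1"
      have lt: "layer x < layer x'" using False x'(2) by simp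
      have m: "Suc m = layer x' - layer x" "m < layer x'" using lt unfolding m_def by arith+
      define y where "y = anc par m x'"
      have y: "y \<in> X" "layer y = layer x' - m" using anc_X[OF x'(1) m(2)] by (auto simp: y_def)
      have fy: "fst (par y) = x" using x'(3) unfolding m(1)[symmetric] y_def by simp
      have "1 \<le> layer x" using lay[OF x] by simp
      then have ly: "1 < layer y" using y(2) m(1) by arith
      have "y \<in> C x" using y fy ly by (simp add: C_def)
      moreover have "x' \<in> D y" unfolding D_def using desc_iff[OF x'(1) y(1)] y m x'
        by (simp add: y_def)
      ultimately show ?thesis by blast
    qed
  qed
next
  show "insert x (\<Union>y\<in>C x. D y) \<subseteq> D x"
  proof
    fix x' assume "x' \<in> insert x (\<Union>y\<in>C x. D y)"
    then consider "x' = x" | y where "y \<in> C x" "x' \<in> D y" by blast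
    then show "x' \<in> D x"
    proof cases
      case 1 then show ?thesis using desc_iff x by (simp add: D_def)
    next
      case 2
      have y: "y \<in> X" "layer y = Suc (layer x)" "fst (par y) = x" using C_layer[OF 2(1)] 2(1)
        by (auto simp: C_def)
      have x': "x'\<in>X" "layer y \<le> layer x'" "anc par (layer x' - layer y) x' = y"
        using 2(2) desc_iff y by (auto simp: D_def)
      have "layer x' - layer x = Suc (layer x' - layer y)" using x' y by auto
      then have "anc par (layer x' - layer x) x' = x" using x' y by simp
      then show ?thesis using desc_iff[OF x'(1) x] x' y by (simp add: D_def)
    qed
  qed
qed

lemma D_disj: assumes a: "y\<in>C x" "y'\<in>C x" "y\<noteq>y'" shows "D y \<inter> D y' = {}"
proof (rule ccontr)
  have l: "layer y = layer y'" "y\<in>X" "y'\<in>X" using C_layer[OF a(1)] C_layer[OF a(2)] by auto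
  assume "D y \<inter> D y' \<noteq> {}"
  then obtain x' where x': "x' \<in> D y" "x' \<in> D y'" by blast
  have "x' \<in> X" using x' by (simp add: D_def)
  have "anc par (layer x' - layer y) x' = y" using x'(1) desc_iff[OF \<open>x'\<in>X\<close> l(2)] by (simp add: D_def)
  moreover have "anc par (layer x' - layer y') x' = y'" using x'(2) desc_iff[OF \<open>x'\<in>X\<close> l(3)] by (simp add: D_def)
  ultimately show False using a(3) l(1) by simp
qed

lemma x_notin: assumes "y\<in>C x" shows "x \<notin> D y"
proof
  assume "x \<in> D y"
  have c: "x \<in> X" "layer y = Suc (layer x)" "y \<in> X" using C_layer[OF assms] by auto
  have "layer y \<le> layer x" using \<open>x \<in> D y\<close> desc_iff[OF c(1) c(3)] by (simp add: D_def)
  then show False using c by simp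
qed

lemma A_tau_D: "A_tau X layer Act par x = (\<Sum>x'\<in>D x. card (Act x'))"
  by (simp add: A_tau_def D_def)

lemma A_tau_rec: assumes x: "x\<in>X"
  shows "A_tau X layer Act par x = card (Act x) + (\<Sum>y\<in>C x. A_tau X layer Act par y)"
proof -
  have "A_tau X layer Act par x = (\<Sum>x'\<in>insert x (\<Union>y\<in>C x. D y). card (Act x'))"
    using D_decomp[OF x] by (simp add: A_tau_D)
  also have "\<dots> = card (Act x) + (\<Sum>x'\<in>(\<Union>y\<in>C x. D y). card (Act x'))"
    using x_notin finC finD by (subst sum.insert) auto
  also have "(\<Sum>x'\<in>(\<Union>y\<in>C x. D y). card (Act x')) = (\<Sum>y\<in>C x. \<Sum>x'\<in>D y. card (Act x'))"
    using finC finD D_disj by (intro sum.UNION_disjoint) auto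
  finally show ?thesis by (simp add: A_tau_D)
qed

lemma C_group: assumes x: "x\<in>X"
  shows "sum g (C x) = (\<Sum>a\<in>Act x. sum g (children X layer par x a))"
proof -
  have img: "(\<lambda>y. snd (par y)) ` C x \<subseteq> Act x"
  proof
    fix b assume "b \<in> (\<lambda>y. snd (par y)) ` C x"
    then obtain y where y: "y \<in> C x" "b = snd (par y)" by blast
    then have "y \<in> X" "1 < layer y" "fst (par y) = x" by (auto simp: C_def)
    then show "b \<in> Act x" using parX y(2) by blast
  qed
  have "sum g (C x) = (\<Sum>a\<in>Act x. sum g {y\<in>C x. snd (par y) = a})"
    by (rule sum.group[symmetric, OF finC actfin[OF x] img])
  also have "\<dots> = (\<Sum>a\<in>Act x. sum g (children X layer par x a))"
  proof (intro sum.cong refl arg_cong[where f="sum g"])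
    fix a show "{y\<in>C x. snd (par y) = a} = children X layer par x a"
      unfolding C_def children_def by (auto simp: prod_eq_iff)
  qed
  finally show ?thesis .
qed

lemma layer_group: assumes h: "1 \<le> h"
  shows "sum g (layer_set X layer (Suc h)) = (\<Sum>x\<in>layer_set X layer h. sum g (C x))"
proof -
  have img: "(\<lambda>y. fst (par y)) ` layer_set X layer (Suc h) \<subseteq> layer_set X layer h"
  proof
    fix b assume "b \<in> (\<lambda>y. fst (par y)) ` layer_set X layer (Suc h)"
    then obtain y where y: "y \<in> X" "layer y = Suc h" "b = fst (par y)" by (auto simp: layer_set_def)
    then have "1 < layer y" using h by simp
    then show "b \<in> layer_set X layer h" using parX[OF y(1)] y by (simp add: layer_set_def)
  qed
  have fin: "finite (layer_set X layer (Suc h))" "finite (layer_set X layer h)"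
    using finX by (auto simp: layer_set_def)
  have "sum g (layer_set X layer (Suc h)) = (\<Sum>x\<in>layer_set X layer h. sum g {y\<in>layer_set X layer (Suc h). fst (par y) = x})"
    by (rule sum.group[symmetric, OF fin img])
  also have "\<dots> = (\<Sum>x\<in>layer_set X layer h. sum g (C x))"
  proof (intro sum.cong refl arg_cong[where f="sum g"])
    fix x assume x: "x \<in> layer_set X layer h"
    show "{y\<in>layer_set X layer (Suc h). fst (par y) = x} = C x"
    proof
      show "{y\<in>layer_set X layer (Suc h). fst (par y) = x} \<subseteq> C x"
        using h by (auto simp: C_def layer_set_def)
      show "C x \<subseteq> {y\<in>layer_set X layer (Suc h). fst (par y) = x}"
      proof
        fix y assume y: "y \<in> C x"
        have "layer y = Suc (layer x)" using C_layer[OF y] by simp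
        then show "y \<in> {y\<in>layer_set X layer (Suc h). fst (par y) = x}"
          using x y by (auto simp: C_def layer_set_def)
      qed
    qed
  qed
  finally show ?thesis .
qed


abbreviation At where "At x \<equiv> A_tau X layer Act par x"
definition S where "S x a = (\<Sum>y\<in>children X layer par x a. At y)"

lemma ch_sub: "y \<in> children X layer par x a \<Longrightarrow> y \<in> X \<and> 1 < layer y \<and> par y = (x,a)"
  by (simp add: children_def)
lemma finch: "finite (children X layer par x a)"
  using finX by (simp add: children_def)
lemma in_ch: "y \<in> X \<Longrightarrow> 1 < layer y \<Longrightarrow> y \<in> children X layer par (fst (par y)) (snd (par y))"
  by (simp add: children_def)

lemma At_S: "x\<in>X \<Longrightarrow> At x = card (Act x) + (\<Sum>a\<in>Act x. S x a)"
  using A_tau_rec C_group by (simp add: S_def)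

lemma card_ge1: assumes "x\<in>X" shows "1 \<le> card (Act x)"
proof -
  have "0 < card (Act x)" using actfin[OF assms] actne[OF assms] by (simp add: card_gt_0_iff)
  then show ?thesis by simp
qed

lemma At_ge1: assumes "x\<in>X" shows "1 \<le> At x"
  using At_S[OF assms] card_ge1[OF assms] by linarith

lemma S_le: assumes "x\<in>X" "a\<in>Act x" shows "S x a \<le> At x"
proof -
  have "S x a \<le> (\<Sum>a\<in>Act x. S x a)" using assms actfin by (intro member_le_sum) auto
  then show ?thesis using At_S[OF assms(1)] by simp
qed

lemma S_ge: "y \<in> children X layer par x a \<Longrightarrow> At y \<le> S x a"
  unfolding S_def using finch by (intro member_le_sum) auto

lemma At_le_AX: "At x \<le> A_X X Act"
  unfolding A_tau_D A_X_def using D_sub finX by (intro sum_mono2) auto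

lemma q_path_1: "layer y = 1 \<Longrightarrow> q_path layer par q0 q y = q0 y"
  by (simp add: q_path_def)

lemma q_path_step: assumes "y \<in> X" "1 < layer y"
  shows "q_path layer par q0 q y = q_path layer par q0 q (fst (par y)) * q (fst (par y)) (snd (par y)) y"
proof -
  have l: "layer (fst (par y)) = layer y - 1" "fst (par y) \<in> X" using parX[OF assms] by auto
  have "1 \<le> layer (fst (par y))" using lay[OF l(2)] by simp
  then have "layer y - 1 = Suc (layer (fst (par y)) - 1)" using l(1) assms(2) by simp
  then show ?thesis unfolding q_path_def by simp
qed

abbreviation ps where "ps x \<equiv> pstar_path X layer Act par x"

lemma ps_1: "layer y = 1 \<Longrightarrow> ps y = real (At y) / real (A_X X Act)"
  by (simp add: pstar_path_def q_path_1 pstar0_def)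

lemma ps_step: "y \<in> X \<Longrightarrow> 1 < layer y \<Longrightarrow> ps y = ps (fst (par y)) * (real (At y) / real (S (fst (par y)) (snd (par y))))"
  unfolding pstar_path_def by (subst q_path_step) (auto simp: pstar_trans_def S_def)

lemma ps_lb_aux: "\<forall>x\<in>X. layer x = Suc n \<longrightarrow> 0 < ps x \<and> real (At x) / real (A_X X Act) \<le> ps x"
proof (induction n)
  case 0
  show ?case
  proof (intro ballI impI)
    fix x assume x: "x \<in> X" "layer x = Suc 0"
    have "1 \<le> real (At x)" "real (At x) \<le> real (A_X X Act)" using At_ge1[OF x(1)] At_le_AX[of x] by auto
    then show "0 < ps x \<and> real (At x) / real (A_X X Act) \<le> ps x" using ps_1[of x] x by simp
  qed
next
  case (Suc n)
  show ?case
  proof (intro ballI impI)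
    fix y assume y: "y \<in> X" "layer y = Suc (Suc n)"
    define x where "x = fst (par y)"
    define a where "a = snd (par y)"
    have xa: "x \<in> X" "layer x = Suc n" "a \<in> Act x" using parX[of y] y by (auto simp: x_def a_def)
    have ych: "y \<in> children X layer par x a" using in_ch y by (simp add: x_def a_def)
    have AX: "0 < real (A_X X Act)" using At_ge1[OF y(1)] At_le_AX[of y] by simp
    have Ay: "1 \<le> real (At y)" using At_ge1[OF y(1)] by simp
    have Sy: "real (At y) \<le> real (S x a)" using S_ge[OF ych] by simp
    have Sx: "real (S x a) \<le> real (At x)" using S_le[OF xa(1) xa(3)] by simp
    have ih: "0 < ps x" "real (At x) / real (A_X X Act) \<le> ps x" using Suc xa by auto
    have psy: "ps y = ps x * (real (At y) / real (S x a))" using ps_step[OF y(1)] y by (simp add: x_def a_def)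
    have pos: "0 < ps y" using psy ih Ay Sy by simp
    have "real (At y) / real (A_X X Act) = (real (S x a) / real (A_X X Act)) * (real (At y) / real (S x a))"
      using Ay Sy by (simp add: field_simps)
    also have "\<dots> \<le> ps x * (real (At y) / real (S x a))"
    proof (rule mult_right_mono)
      have "real (S x a) / real (A_X X Act) \<le> real (At x) / real (A_X X Act)"
        using Sx AX by (intro divide_right_mono) auto
      then show "real (S x a) / real (A_X X Act) \<le> ps x" using ih(2) by linarith
      show "0 \<le> real (At y) / real (S x a)" by simp
    qed
    finally show "0 < ps y \<and> real (At y) / real (A_X X Act) \<le> ps y" using pos psy by simp
  qed
qed

lemma ps_lb: assumes "x \<in> X" shows "0 < ps x" "real (At x) / real (A_X X Act) \<le> ps x"
proof -
  obtain n where "layer x = Suc n" using lay[OF assms] by (cases "layer x") auto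
  then show "0 < ps x" "real (At x) / real (A_X X Act) \<le> ps x" using ps_lb_aux assms by blast+
qed

lemma At_pow: assumes "\<forall>x\<in>X. card (Act x) = A"
  shows "\<forall>x\<in>X. H - layer x = k \<longrightarrow> A ^ (Suc k) \<le> At x"
proof (induction k)
  case 0
  show ?case
  proof (intro ballI impI)
    fix x assume x: "x \<in> X"
    have "card (Act x) \<le> At x" using At_S[OF x] by linarith
    then show "A ^ Suc 0 \<le> At x" using assms x by simp
  qed
next
  case (Suc k)
  show ?case
  proof (intro ballI impI)
    fix x assume x: "x \<in> X" "H - layer x = Suc k"
    have "\<forall>a\<in>Act x. A ^ Suc k \<le> S x a"
    proof
      fix a assume a: "a \<in> Act x"
      have "layer x < H" using x(2) by simp
      then obtain y where y: "y \<in> children X layer par x a" using chne[OF x(1) _ a] by blast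
      have yy: "y \<in> X" "1 < layer y" "par y = (x, a)" using ch_sub[OF y] by auto
      have "layer y = Suc (layer x)" using parX[OF yy(1) yy(2)] yy by auto
      then have "A ^ Suc k \<le> At y" using Suc x(2) yy(1) by auto
      then show "A ^ Suc k \<le> S x a" using S_ge[OF y] by simp
    qed
    then have "(\<Sum>a\<in>Act x. A ^ Suc k) \<le> (\<Sum>a\<in>Act x. S x a)" by (intro sum_mono) blast
    then have "A * A ^ Suc k \<le> (\<Sum>a\<in>Act x. S x a)" using assms x by simp
    then show "A ^ Suc (Suc k) \<le> At x" using At_S[OF x(1)] by simp
  qed
qed

end

lemma powi_neg: assumes "h \<le> H" shows "(r::real) powi (int h - int H) = 1 / r ^ (H - h)"
proof -
  have e: "int h - int H = - int (H - h)" using assms by simp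
  show ?thesis unfolding e power_int_minus_divide power_int_of_nat ..
qed

locale TQ = T X H layer Act par
  for X :: "'x set" and H :: nat and layer :: "'x \<Rightarrow> nat" and Act :: "'x \<Rightarrow> 'a set"
    and par :: "'x \<Rightarrow> 'x \<times> 'a" +
  fixes q0 :: "'x \<Rightarrow> real" and q :: "'x \<Rightarrow> 'a \<Rightarrow> 'x \<Rightarrow> real"
  assumes q0_nonneg: "\<forall>x\<in>layer_set X layer 1. 0 \<le> q0 x"
    and q0_sum: "(\<Sum>x\<in>layer_set X layer 1. q0 x) = 1"
    and q_nonneg: "\<forall>x\<in>X. layer x < H \<longrightarrow> (\<forall>a\<in>Act x. \<forall>y\<in>children X layer par x a. 0 \<le> q x a y)"
    and q_sum: "\<forall>x\<in>X. layer x < H \<longrightarrow> (\<forall>a\<in>Act x. (\<Sum>y\<in>children X layer par x a. q x a y) = 1)"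
begin

abbreviation qp where "qp x \<equiv> q_path layer par q0 q x"
definition Lh where "Lh h = (\<Sum>x\<in>layer_set X layer h. real (card (Act x)) * qp x / ps x)"
definition Tt where "Tt h = (\<Sum>x\<in>layer_set X layer h. qp x / ps x * real (At x))"

lemma qp_aux: "\<forall>x\<in>X. layer x = Suc n \<longrightarrow> 0 \<le> qp x"
proof (induction n)
  case 0
  show ?case
  proof (intro ballI impI)
    fix x assume x: "x \<in> X" "layer x = Suc 0"
    then have "x \<in> layer_set X layer 1" by (simp add: layer_set_def)
    then have "0 \<le> q0 x" using q0_nonneg by blast
    then show "0 \<le> qp x" using q_path_1[of x q0 q] x(2) by simp
  qed
next
  case (Suc n)
  show ?case
  proof (intro ballI impI)
    fix y assume y: "y \<in> X" "layer y = Suc (Suc n)"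
    define x where "x = fst (par y)"
    define a where "a = snd (par y)"
    have xa: "x \<in> X" "layer x = Suc n" "a \<in> Act x" using parX[of y] y by (auto simp: x_def a_def)
    have ych: "y \<in> children X layer par x a" using in_ch y by (simp add: x_def a_def)
    have "layer x < H" using lay[OF y(1)] xa y by simp
    then have "\<forall>a\<in>Act x. \<forall>y\<in>children X layer par x a. 0 \<le> q x a y" using q_nonneg xa(1) by blast
    then have "0 \<le> q x a y" using xa(3) ych by blast
    moreover have "0 \<le> qp x" using Suc.IH xa(1,2) by blast
    ultimately show "0 \<le> qp y" using q_path_step[OF y(1)] y by (simp add: x_def a_def)
  qed
qed

lemma qp_nonneg: assumes "x \<in> X" shows "0 \<le> qp x"
proof -
  obtain n where "layer x = Suc n" using lay[OF assms] by (cases "layer x") auto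
  then show ?thesis using qp_aux assms by blast
qed

lemma pair: assumes x: "x \<in> X" and a: "a \<in> Act x"
  shows "(\<Sum>y\<in>children X layer par x a. qp y / ps y * real (At y)) = qp x / ps x * real (S x a)"
proof (cases "layer x < H")
  case True
  have psx: "0 < ps x" using ps_lb[OF x] by simp
  have "(\<Sum>y\<in>children X layer par x a. qp y / ps y * real (At y))
      = (\<Sum>y\<in>children X layer par x a. qp x / ps x * real (S x a) * q x a y)"
  proof (rule sum.cong[OF refl])
    fix y assume y: "y \<in> children X layer par x a"
    have yy: "y \<in> X" "1 < layer y" "par y = (x, a)" using ch_sub[OF y] by auto
    have Ay: "1 \<le> real (At y)" using At_ge1[OF yy(1)] by simp
    have Sy: "real (At y) \<le> real (S x a)" using S_ge[OF y] by simp
    have qpy: "qp y = qp x * q x a y" using q_path_step[OF yy(1) yy(2)] yy(3) by simp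
    have psy: "ps y = ps x * (real (At y) / real (S x a))" using ps_step[OF yy(1) yy(2)] yy(3) by simp
    show "qp y / ps y * real (At y) = qp x / ps x * real (S x a) * q x a y"
      unfolding qpy psy using Ay Sy psx by (simp add: field_simps)
  qed
  also have "\<dots> = qp x / ps x * real (S x a) * (\<Sum>y\<in>children X layer par x a. q x a y)"
    by (simp add: sum_distrib_left)
  also have "\<dots> = qp x / ps x * real (S x a)" using q_sum x a True by simp
  finally show ?thesis .
next
  case False
  have e: "children X layer par x a = {}"
  proof (rule ccontr)
    assume "children X layer par x a \<noteq> {}"
    then obtain y where y: "y \<in> children X layer par x a" by blast
    have yy: "y \<in> X" "1 < layer y" "par y = (x, a)" using ch_sub[OF y] by auto
    have "layer y = Suc (layer x)" using parX[OF yy(1) yy(2)] yy by auto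
    then show False using lay[OF yy(1)] False by simp
  qed
  then show ?thesis by (simp add: S_def)
qed

lemma rec: assumes h: "1 \<le> h" shows "Tt h = Lh h + Tt (Suc h)"
proof -
  have "Tt (Suc h) = (\<Sum>x\<in>layer_set X layer h. \<Sum>y\<in>C x. qp y / ps y * real (At y))"
    unfolding Tt_def by (rule layer_group[OF h])
  also have "\<dots> = (\<Sum>x\<in>layer_set X layer h. \<Sum>a\<in>Act x. qp x / ps x * real (S x a))"
  proof (rule sum.cong[OF refl])
    fix x assume "x \<in> layer_set X layer h"
    then have x: "x \<in> X" by (simp add: layer_set_def)
    show "(\<Sum>y\<in>C x. qp y / ps y * real (At y)) = (\<Sum>a\<in>Act x. qp x / ps x * real (S x a))"
      by (subst C_group[OF x], rule sum.cong[OF refl], rule pair[OF x])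
  qed
  finally have t: "Tt (Suc h) = (\<Sum>x\<in>layer_set X layer h. \<Sum>a\<in>Act x. qp x / ps x * real (S x a))" .
  have "Tt h = (\<Sum>x\<in>layer_set X layer h. real (card (Act x)) * qp x / ps x + (\<Sum>a\<in>Act x. qp x / ps x * real (S x a)))"
  proof (unfold Tt_def, rule sum.cong[OF refl])
    fix x assume "x \<in> layer_set X layer h"
    then have x: "x \<in> X" by (simp add: layer_set_def)
    have "real (At x) = real (card (Act x)) + (\<Sum>a\<in>Act x. real (S x a))" using At_S[OF x] by simp
    then show "qp x / ps x * real (At x) = real (card (Act x)) * qp x / ps x + (\<Sum>a\<in>Act x. qp x / ps x * real (S x a))"
      by (simp add: sum_distrib_left sum_divide_distrib algebra_simps)
  qed
  also have "\<dots> = Lh h + Tt (Suc h)" unfolding t Lh_def by (simp add: sum.distrib)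
  finally show ?thesis .
qed

lemma tele: "(\<Sum>h=1..n. Lh h) = Tt 1 - Tt (Suc n)"
proof (induction n)
  case 0 then show ?case by simp
next
  case (Suc n)
  have "(\<Sum>h=1..Suc n. Lh h) = (\<Sum>h=1..n. Lh h) + Lh (Suc n)" by simp
  then show ?case using Suc rec[of "Suc n"] by simp
qed

lemma Tt_end: "Tt (Suc H) = 0"
proof -
  have "layer_set X layer (Suc H) = {}" using lay by (force simp: layer_set_def)
  then show ?thesis by (simp add: Tt_def)
qed

lemma Tt_1: "Tt 1 = real (A_X X Act)"
proof -
  have "Tt 1 = (\<Sum>x\<in>layer_set X layer 1. real (A_X X Act) * q0 x)"
  proof (unfold Tt_def, rule sum.cong[OF refl])
    fix x assume "x \<in> layer_set X layer 1"
    then have x: "x \<in> X" "layer x = 1" by (auto simp: layer_set_def)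
    have "1 \<le> real (At x)" "real (At x) \<le> real (A_X X Act)" using At_ge1[OF x(1)] At_le_AX[of x] by auto
    then show "qp x / ps x * real (At x) = real (A_X X Act) * q0 x"
      unfolding ps_1[OF x(2)] q_path_1[OF x(2)] by (simp add: field_simps)
  qed
  also have "\<dots> = real (A_X X Act)" using q0_sum by (simp add: sum_distrib_left[symmetric])
  finally show ?thesis .
qed

lemma part1: "(\<Sum>h=1..H. Lh h) = real (A_X X Act)"
  using tele[of H] Tt_end Tt_1 by simp

lemma Lh_nonneg: "0 \<le> Lh h"
  unfolding Lh_def using qp_nonneg ps_lb by (intro sum_nonneg) (auto simp: layer_set_def intro!: divide_nonneg_pos)

lemma Tt_le: "1 \<le> h \<Longrightarrow> Tt h \<le> Tt 1"
proof (induction h)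
  case 0 then show ?case by simp
next
  case (Suc h)
  show ?case
  proof (cases "h = 0")
    case True then show ?thesis by simp
  next
    case False
    then have "Tt (Suc h) \<le> Tt h" using rec[of h] Lh_nonneg[of h] by simp
    then show ?thesis using Suc False by simp
  qed
qed

lemma part2: assumes A: "\<forall>x\<in>X. card (Act x) = A" and h: "h \<in> {1..H}"
  shows "Lh h \<le> real A powi (int h - int H) * real (A_X X Act)"
proof -
  have pw: "real A powi (int h - int H) = 1 / real A ^ (H - h)" using h powi_neg[of h H] by simp
  have "Lh h \<le> (\<Sum>x\<in>layer_set X layer h. real A powi (int h - int H) * (qp x / ps x * real (At x)))"
    unfolding Lh_def
  proof (rule sum_mono)
    fix x assume "x \<in> layer_set X layer h"
    then have x: "x \<in> X" "layer x = h" by (auto simp: layer_set_def)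
    have c: "card (Act x) = A" using A x by simp
    have A1: "1 \<le> A" using card_ge1[OF x(1)] c by simp
    have "A ^ Suc (H - h) \<le> At x" using At_pow[OF A] x by blast
    then have "real A ^ Suc (H - h) \<le> real (At x)" by (metis of_nat_le_iff of_nat_power)
    then have le: "real A \<le> real (At x) / real A ^ (H - h)" using A1
      by (simp add: field_simps)
    have nn: "0 \<le> qp x / ps x" using qp_nonneg[OF x(1)] ps_lb[OF x(1)] by simp
    have "real (card (Act x)) * qp x / ps x = real A * (qp x / ps x)" using c by simp
    also have "\<dots> \<le> real (At x) / real A ^ (H - h) * (qp x / ps x)" using le nn by (rule mult_right_mono)
    also have "\<dots> = real A powi (int h - int H) * (qp x / ps x * real (At x))" using pw by simp
    finally show "real (card (Act x)) * qp x / ps x \<le> real A powi (int h - int H) * (qp x / ps x * real (At x))" .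
  qed
  also have "\<dots> = real A powi (int h - int H) * Tt h" unfolding Tt_def by (simp add: sum_distrib_left)
  also have "\<dots> \<le> real A powi (int h - int H) * Tt 1"
    using Tt_le[of h] h pw by (intro mult_left_mono) auto
  finally show ?thesis using Tt_1 by simp
qed

end

theorem mainTheorem7:
  fixes X :: "'x set" and H :: nat and layer :: "'x \<Rightarrow> nat" and Act :: "'x \<Rightarrow> 'a set"
    and par :: "'x \<Rightarrow> 'x \<times> 'a"
    and q0 :: "'x \<Rightarrow> real" and q :: "'x \<Rightarrow> 'a \<Rightarrow> 'x \<Rightarrow> real"
  assumes tree: "infoset_tree X H layer Act par"
    and q0_nonneg: "\<forall>x\<in>layer_set X layer 1. 0 \<le> q0 x"
    and q0_sum: "(\<Sum>x\<in>layer_set X layer 1. q0 x) = 1"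
    and q_nonneg: "\<forall>x\<in>X. layer x < H \<longrightarrow> (\<forall>a\<in>Act x. \<forall>y\<in>children X layer par x a. 0 \<le> q x a y)"
    and q_sum: "\<forall>x\<in>X. layer x < H \<longrightarrow> (\<forall>a\<in>Act x. (\<Sum>y\<in>children X layer par x a. q x a y) = 1)"
  shows "((\<Sum>h=1..H. \<Sum>x\<in>layer_set X layer h.
            real (card (Act x)) * q_path layer par q0 q x / pstar_path X layer Act par x)
           = real (A_X X Act)) \<and>
         (\<forall>A :: nat. (\<forall>x\<in>X. card (Act x) = A) \<longrightarrow>
           (\<forall>h\<in>{1..H}. (\<Sum>x\<in>layer_set X layer h.
              real (card (Act x)) * q_path layer par q0 q x / pstar_path X layer Act par x)
            \<le> real A powi (int h - int H) * real (A_X X Act)))"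
proof -
  interpret TQ X H layer Act par q0 q
    using assms by (unfold_locales) auto
  show ?thesis using part1 part2 unfolding Lh_def by blast
qed

end
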